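(* Let $p,q\ge1$, $\alpha:\mathbb Z_p\times\mathbb Z_q\to[0,1]$ a probability distribution with $\alpha(0,0)=0$, and let $\tilde{\mathcal T}_{*t}=e^{t\tilde{\mathcal L}_*}$ with $\tilde{\mathcal L}_*(x)=\sum_{(i,j)}\alpha(i,j)(J_p^i\otimes J_q^j)x(J_p^i\otimes J_q^j)^*-x$ on $\mathcal M_p(\mathbb C)\otimes\mathcal M_q(\mathbb C)$ (the pre-dual of the $\rho$-adjoint, $\rho=\frac{1}{pq}\mathbf1$, of the generator of the circulant semigroup $e^{t\mathcal L_*}$, $\mathcal L_*(x)=\sum_{(i,j)}\alpha(p-i,q-j)(J_p^i\otimes J_q^j)x(J_p^i\otimes J_q^j)^*-x$). With $\Phi_{m,n}(t)$ as below, for all $(i,j),(i',j')$ and $t\ge0$: (i) $\tilde{\mathcal T}_{*t}(|e_i\otimes e_j\rangle\langle e_{i'}\otimes e_{j'}|)=\frac{1}{pq}\sum_{m,n}\Phi_{p-m,q-n}(t)|e_{m+i}\otimes e_{n+j}\rangle\langle e_{m+i'}\otimes e_{n+j'}|$; equivalently, on each subspace $\mathrm{span}\{|e_i\otimes e_j\rangle\langle e_{i+k}\otimes e_{j+l}|\}$ the action corresponds to $e_i\otimes e_j\mapsto(e_i\otimes e_j)e^{tQ^{T}}$, $Q^T$ the transpose of $Q=\sum_{i,j}\alpha'(i,j)J_p^i\otimes J_q^j$; (ii) $\tilde\Omega_t=\frac{1}{pq}\sum_{m,n}\Phi_{p-m,q-n}(t)|u_{mn}\rangle\langle u_{mn}|$,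 where $u_{mn}=\frac{1}{\sqrt{pq}}\sum_{i,j}(e_i\otimes e_j)\otimes(e_{m+i}\otimes e_{n+j})$.
   Context: $\{e_j\}$ canonical bases (indices mod $p$, $q$); $J_p=\sum_j|e_j\rangle\langle e_{j+1}|$, similarly $J_q$; $\omega_p,\omega_q$ primitive roots of unity. $\alpha'(i,j)=\alpha(i,j)$ for $(i,j)\ne(0,0)$, $\alpha'(0,0)=-1$; $\lambda_{kl}=\sum_{i,j}\alpha'(i,j)\overline\omega_p^{ik}\overline\omega_q^{jl}$; $\Phi_{m,n}(t)=\sum_{k,l}\omega_p^{mk}\omega_q^{nl}e^{t\lambda_{kl}}$ (indices mod $p,q$). $\Omega_\rho=\frac{1}{\sqrt{pq}}\sum_{i,j}(e_i\otimes e_j)\otimes(e_i\otimes e_j)$ and $\tilde\Omega_t=(\mathrm{id}\otimes\tilde{\mathcal T}_{*t})(|\Omega_\rho\rangle\langle\Omega_\rho|)$. *)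

theory Defs
  imports Complex_Main
begin

text \<open>Matrices over a finite index set are represented as functions
  index => index => complex; only entries with indices in the relevant
  index set are meaningful.\<close>

type_synonym 'a cmat = "'a \<Rightarrow> 'a \<Rightarrow> complex"

definition idx :: "nat \<Rightarrow> nat \<Rightarrow> (nat \<times> nat) set" where
  "idx p q = {0..<p} \<times> {0..<q}"

definition mmul :: "nat \<Rightarrow> nat cmat \<Rightarrow> nat cmat \<Rightarrow> nat cmat" where
  "mmul n A B = (\<lambda>a b. \<Sum>c<n. A a c * B c b)"

definition mone :: "nat cmat" where
  "mone = (\<lambda>a b. if a = b then 1 else 0)"

fun mpow :: "nat \<Rightarrow> nat cmat \<Rightarrow> nat \<Rightarrow> nat cmat" where
  "mpow n A 0 = mone"
| "mpow n A (Suc k) = mmul n (mpow n A k) A"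

definition shiftJ :: "nat \<Rightarrow> nat cmat" where
  "shiftJ n = (\<lambda>a b. if b = (a + 1) mod n then 1 else 0)"

definition kron :: "nat cmat \<Rightarrow> nat cmat \<Rightarrow> (nat \<times> nat) cmat" where
  "kron A B = (\<lambda>(a1, a2) (b1, b2). A a1 b1 * B a2 b2)"

definition pmul :: "nat \<Rightarrow> nat \<Rightarrow> (nat \<times> nat) cmat \<Rightarrow> (nat \<times> nat) cmat \<Rightarrow> (nat \<times> nat) cmat" where
  "pmul p q A B = (\<lambda>a b. \<Sum>c\<in>idx p q. A a c * B c b)"

definition adj :: "'a cmat \<Rightarrow> 'a cmat" where
  "adj A = (\<lambda>a b. cnj (A b a))"

definition KJ :: "nat \<Rightarrow> nat \<Rightarrow> nat \<Rightarrow> nat \<Rightarrow> (nat \<times> nat) cmat" where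
  "KJ p q i j = kron (mpow p (shiftJ p) i) (mpow q (shiftJ q) j)"

definition Ltil :: "nat \<Rightarrow> nat \<Rightarrow> (nat \<Rightarrow> nat \<Rightarrow> real) \<Rightarrow> (nat \<times> nat) cmat \<Rightarrow> (nat \<times> nat) cmat" where
  "Ltil p q \<alpha> x = (\<lambda>a b.
     (\<Sum>(i, j)\<in>idx p q. complex_of_real (\<alpha> i j) *
        pmul p q (pmul p q (KJ p q i j) x) (adj (KJ p q i j)) a b) - x a b)"

definition Ttil :: "nat \<Rightarrow> nat \<Rightarrow> (nat \<Rightarrow> nat \<Rightarrow> real) \<Rightarrow> real \<Rightarrow> (nat \<times> nat) cmat \<Rightarrow> (nat \<times> nat) cmat" where
  "Ttil p q \<alpha> t x = (\<lambda>a b. \<Sum>n. complex_of_real (t ^ n / fact n) * ((Ltil p q \<alpha> ^^ n) x) a b)"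

definition omega :: "nat \<Rightarrow> complex" where
  "omega n = exp (2 * complex_of_real pi * \<i> / of_nat n)"

definition alpha' :: "(nat \<Rightarrow> nat \<Rightarrow> real) \<Rightarrow> nat \<Rightarrow> nat \<Rightarrow> real" where
  "alpha' \<alpha> i j = (if i = 0 \<and> j = 0 then -1 else \<alpha> i j)"

definition lam :: "nat \<Rightarrow> nat \<Rightarrow> (nat \<Rightarrow> nat \<Rightarrow> real) \<Rightarrow> nat \<Rightarrow> nat \<Rightarrow> complex" where
  "lam p q \<alpha> k l = (\<Sum>(i, j)\<in>idx p q. complex_of_real (alpha' \<alpha> i j) *
      cnj (omega p) ^ (i * k) * cnj (omega q) ^ (j * l))"

definition Phi :: "nat \<Rightarrow> nat \<Rightarrow> (nat \<Rightarrow> nat \<Rightarrow> real) \<Rightarrow> nat \<Rightarrow> nat \<Rightarrow> real \<Rightarrow> complex" where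
  "Phi p q \<alpha> m n t = (\<Sum>(k, l)\<in>idx p q. omega p ^ (m * k) * omega q ^ (n * l) *
      exp (complex_of_real t * lam p q \<alpha> k l))"

definition munit :: "'a \<Rightarrow> 'a \<Rightarrow> 'a cmat" where
  "munit a b = (\<lambda>x y. if x = a \<and> y = b then 1 else 0)"

definition outer :: "('a \<Rightarrow> complex) \<Rightarrow> ('a \<Rightarrow> complex) \<Rightarrow> 'a cmat" where
  "outer v w = (\<lambda>x y. v x * cnj (w y))"

definition idtensor :: "('b cmat \<Rightarrow> 'b cmat) \<Rightarrow> ('a \<times> 'b) cmat \<Rightarrow> ('a \<times> 'b) cmat" where
  "idtensor T X = (\<lambda>(a, c) (b, d). T (\<lambda>c' d'. X (a, c') (b, d')) c d)"

definition uvec :: "nat \<Rightarrow> nat \<Rightarrow> nat \<Rightarrow> nat \<Rightarrow> (nat \<times> nat) \<times> (nat \<times> nat) \<Rightarrow> complex" where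
  "uvec p q m n = (\<lambda>((i, j), (k, l)).
     if (i, j) \<in> idx p q \<and> k = (m + i) mod p \<and> l = (n + j) mod q
     then complex_of_real (1 / sqrt (real (p * q))) else 0)"

definition OmegaRho :: "nat \<Rightarrow> nat \<Rightarrow> (nat \<times> nat) \<times> (nat \<times> nat) \<Rightarrow> complex" where
  "OmegaRho p q = (\<lambda>((i, j), (k, l)).
     if (i, j) \<in> idx p q \<and> (k, l) = (i, j)
     then complex_of_real (1 / sqrt (real (p * q))) else 0)"

end

theory Submission imports Defs "HOL-Analysis.Analysis" begin


lemma omega_pow_n: "n \<ge> 1 \<Longrightarrow> omega n ^ n = 1"
proof -
  assume n: "n \<ge> 1"
  have "omega n ^ n = exp (of_nat n * (2 * complex_of_real pi * \<i> / of_nat n))"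
    unfolding omega_def by (rule exp_of_nat_mult[symmetric])
  also have "of_nat n * (2 * complex_of_real pi * \<i> / of_nat n) = 2 * complex_of_real pi * \<i>"
    using n by (simp add: field_simps)
  finally show ?thesis by simp
qed

lemma omega_cnj_mult: "cnj (omega n) * omega n = 1"
proof -
  have "cnj (omega n) = exp (- (2 * complex_of_real pi * \<i> / of_nat n))"
    unfolding omega_def exp_cnj by (simp add: complex_cnj_divide)
  then show ?thesis unfolding omega_def by (simp add: exp_minus field_simps)
qed

lemma omega_pow_ne1: "0 < m \<Longrightarrow> m < n \<Longrightarrow> omega n ^ m \<noteq> 1"
proof
  assume m: "0 < m" "m < n" and e: "omega n ^ m = 1"
  have "omega n ^ m = exp (of_nat m * (2 * complex_of_real pi * \<i> / of_nat n))"
    unfolding omega_def by (rule exp_of_nat_mult[symmetric])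
  with e have "exp (of_nat m * (2 * complex_of_real pi * \<i> / of_nat n)) = 1" by simp
  then obtain k :: int where k: "Im (of_nat m * (2 * complex_of_real pi * \<i> / of_nat n)) = of_int (2*k) * pi"
    unfolding exp_eq_1 by blast
  have "Im (of_nat m * (2 * complex_of_real pi * \<i> / of_nat n)) = 2 * pi * m / n"
    by (simp add: Im_divide_of_nat)
  with k have "2 * pi * m / n = 2 * k * pi" by simp
  then have "real m / n = k" using pi_gt_zero m by (simp add: field_simps)
  moreover have "0 < real m / n" "real m / n < 1" using m by auto
  ultimately show False by (metis of_int_0_less_iff of_int_less_1_iff not_less zero_less_one_class.zero_le_one not_le int_one_le_iff_zero_less)
qed

lemma pow_mod_root: "(z::complex) ^ n = 1 \<Longrightarrow> z ^ (x mod n) = z ^ x"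
proof -
  assume z: "z ^ n = 1"
  have "z ^ x = z ^ (x mod n + n * (x div n))" by (metis mod_mult_div_eq)
  also have "\<dots> = z ^ (x mod n)" by (simp only: power_add power_mult z power_one mult_1_right)
  finally show ?thesis by simp
qed

lemma geo_sum: assumes "m < n" shows "(\<Sum>k<n. (cnj (omega n) ^ m) ^ k) = (if m = 0 then of_nat n else 0)"
proof (cases "m = 0")
  case True then show ?thesis by simp
next
  case False
  have n: "n \<ge> 1" using assms by simp
  have c: "cnj (omega n) ^ m = cnj (omega n ^ m)" by simp
  have ne: "cnj (omega n) ^ m \<noteq> 1" unfolding c using omega_pow_ne1[of m n] False assms
    by (metis complex_cnj_one_iff gr0I)
  have "(cnj (omega n) ^ m) ^ n = cnj ((omega n ^ n) ^ m)" by (simp add: power_mult[symmetric] mult.commute)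
  also have "\<dots> = 1" using omega_pow_n[OF n] by simp
  finally show ?thesis using ne False by (simp add: sum_gp_strict)
qed

lemma cnj_omega_pow: assumes "m \<le> n" "n \<ge> 1" shows "cnj (omega n) ^ m = omega n ^ (n - m)"
proof -
  have nz: "omega n ^ m \<noteq> 0" unfolding omega_def by simp
  have "omega n ^ (n - m) * omega n ^ m = 1" using omega_pow_n[OF assms(2)] assms
    by (simp add: power_add[symmetric])
  moreover have "cnj (omega n) ^ m * omega n ^ m = 1" using omega_cnj_mult
    by (metis power_mult_distrib power_one)
  ultimately show ?thesis using nz by (metis mult_right_cancel)
qed



definition addm :: "nat \<Rightarrow> nat \<Rightarrow> nat \<times> nat \<Rightarrow> nat \<times> nat \<Rightarrow> nat \<times> nat" where
  "addm p q m c = ((fst m + fst c) mod p, (snd m + snd c) mod q)"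

lemma mpow_shift: "a < n \<Longrightarrow> mpow n (shiftJ n) i a b = (if b = (a+i) mod n then 1 else 0)"
proof (induction i arbitrary: b)
  case 0 then show ?case by (simp add: mone_def)
next
  case (Suc i)
  have "mpow n (shiftJ n) (Suc i) a b = (\<Sum>c<n. (if c = (a+i) mod n then 1 else 0) * shiftJ n c b)"
    using Suc by (simp add: mmul_def)
  also have "\<dots> = shiftJ n ((a+i) mod n) b"
  proof -
    have "(\<lambda>c. (if c = (a+i) mod n then 1 else 0) * shiftJ n c b) = (\<lambda>c. if c = (a+i) mod n then shiftJ n ((a+i) mod n) b else 0)"
      by auto
    then have "(\<Sum>c<n. (if c = (a+i) mod n then 1 else 0) * shiftJ n c b) = (\<Sum>c<n. if c = (a+i) mod n then shiftJ n ((a+i) mod n) b else 0)"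
      by (intro sum.cong) auto
    also have "\<dots> = shiftJ n ((a+i) mod n) b" using Suc.prems by (simp add: sum.delta')
    finally show ?thesis .
  qed
  also have "\<dots> = (if b = (a + Suc i) mod n then 1 else 0)"
    by (simp add: shiftJ_def mod_Suc_eq)
  finally show ?case .
qed

lemma KJ_entry: "a \<in> idx p q \<Longrightarrow> KJ p q i j a e = (if e = addm p q (i, j) a then 1 else 0)"
  by (cases a; cases e) (auto simp: KJ_def kron_def idx_def addm_def mpow_shift add.commute)

lemma Ltil_add: "Ltil p q \<alpha> (\<lambda>a b. x a b + y a b) = (\<lambda>a b. Ltil p q \<alpha> x a b + Ltil p q \<alpha> y a b)"
  by (simp add: Ltil_def pmul_def sum.distrib ring_distribs sum_distrib_left sum_distrib_right case_prod_beta algebra_simps)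

lemma Ltil_scale: "Ltil p q \<alpha> (\<lambda>a b. c * x a b) = (\<lambda>a b. c * Ltil p q \<alpha> x a b)"
  by (simp add: Ltil_def pmul_def sum_distrib_left sum_distrib_right case_prod_beta algebra_simps)

lemma Ltil_zero: "Ltil p q \<alpha> (\<lambda>a b. 0) = (\<lambda>a b. 0)"
  by (simp add: Ltil_def pmul_def)

lemma Ltil_sum: "finite S \<Longrightarrow> Ltil p q \<alpha> (\<lambda>a b. \<Sum>k\<in>S. c k * f k a b) a b = (\<Sum>k\<in>S. c k * Ltil p q \<alpha> (f k) a b)"
proof (induction S arbitrary: a b rule: finite_induct)
  case empty then show ?case by (simp add: Ltil_zero)
next
  case (insert k S)
  have "Ltil p q \<alpha> (\<lambda>a b. \<Sum>k\<in>insert k S. c k * f k a b) = Ltil p q \<alpha> (\<lambda>a b. c k * f k a b + (\<Sum>k\<in>S. c k * f k a b))"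
    using insert by simp
  also have "\<dots> = (\<lambda>a b. c k * Ltil p q \<alpha> (f k) a b + Ltil p q \<alpha> (\<lambda>a b. \<Sum>k\<in>S. c k * f k a b) a b)"
    by (simp add: Ltil_add Ltil_scale)
  finally show ?case using insert by simp
qed

lemma Ltil_local: assumes "\<forall>a\<in>idx p q. \<forall>b\<in>idx p q. x a b = y a b" "a \<in> idx p q" "b \<in> idx p q"
  shows "Ltil p q \<alpha> x a b = Ltil p q \<alpha> y a b"
  using assms unfolding Ltil_def pmul_def by simp

lemma finite_idx[simp]: "finite (idx p q)" by (simp add: idx_def)

lemma addm_idx: "p \<ge> 1 \<Longrightarrow> q \<ge> 1 \<Longrightarrow> addm p q m c \<in> idx p q"
  by (simp add: addm_def idx_def)

lemma pm1: assumes "a \<in> idx p q" "u \<in> idx p q"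
  shows "pmul p q (KJ p q i j) (munit u v) a c = (if u = addm p q (i,j) a then 1 else 0) * (if c = v then 1 else 0)"
proof -
  have "pmul p q (KJ p q i j) (munit u v) a c = (\<Sum>e\<in>idx p q. if e = u then (if u = addm p q (i,j) a then 1 else 0) * (if c = v then 1 else 0) else 0)"
    unfolding pmul_def using assms(1) by (intro sum.cong) (auto simp: KJ_entry munit_def)
  also have "\<dots> = (if u = addm p q (i,j) a then 1 else 0) * (if c = v then 1 else 0)"
    using assms(2) by (simp add: sum.delta)
  finally show ?thesis .
qed

lemma pm2: assumes "a \<in> idx p q" "u \<in> idx p q" "b \<in> idx p q" "v \<in> idx p q"
  shows "pmul p q (pmul p q (KJ p q i j) (munit u v)) (adj (KJ p q i j)) a b
     = (if u = addm p q (i,j) a \<and> v = addm p q (i,j) b then 1 else 0)"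
proof -
  have "pmul p q (pmul p q (KJ p q i j) (munit u v)) (adj (KJ p q i j)) a b
     = (\<Sum>c\<in>idx p q. if c = v then (if u = addm p q (i,j) a then 1 else 0) * (if v = addm p q (i,j) b then 1 else 0) else 0)"
    unfolding pmul_def[of p q "pmul p q (KJ p q i j) (munit u v)"] adj_def using assms by (intro sum.cong) (auto simp: pm1 KJ_entry)
  also have "\<dots> = (if u = addm p q (i,j) a \<and> v = addm p q (i,j) b then 1 else 0)"
    using assms(4) by (simp add: sum.delta)
  finally show ?thesis .
qed

lemma Ltil_munit: assumes "a \<in> idx p q" "u \<in> idx p q" "b \<in> idx p q" "v \<in> idx p q"
    and "\<alpha> 0 0 = 0" "p \<ge> 1" "q \<ge> 1"
  shows "Ltil p q \<alpha> (munit u v) a b = (\<Sum>s\<in>idx p q. complex_of_real (alpha' \<alpha> (fst s) (snd s)) *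
            (if u = addm p q s a \<and> v = addm p q s b then 1 else 0))"
proof -
  let ?g = "\<lambda>s. (if u = addm p q s a \<and> v = addm p q s b then 1 else 0 :: complex)"
  have z: "(0,0) \<in> idx p q" using assms by (simp add: idx_def)
  have g0: "?g (0,0) = munit u v a b" using assms(1,3)
    by (cases a; cases b) (auto simp: munit_def addm_def idx_def)
  have "Ltil p q \<alpha> (munit u v) a b = (\<Sum>s\<in>idx p q. complex_of_real (\<alpha> (fst s) (snd s)) * ?g s) - ?g (0,0)"
    unfolding Ltil_def g0 using assms by (simp add: pm2 case_prod_beta)
  also have "\<dots> = (\<Sum>s\<in>idx p q. complex_of_real (alpha' \<alpha> (fst s) (snd s)) * ?g s)"
  proof -
    have "(\<Sum>s\<in>idx p q. complex_of_real (\<alpha> (fst s) (snd s)) * ?g s) = (\<Sum>s\<in>idx p q - {(0,0)}. complex_of_real (\<alpha> (fst s) (snd s)) * ?g s)"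
      using z assms(5) by (simp add: sum.remove)
    moreover have "(\<Sum>s\<in>idx p q. complex_of_real (alpha' \<alpha> (fst s) (snd s)) * ?g s) = - ?g (0,0) + (\<Sum>s\<in>idx p q - {(0,0)}. complex_of_real (alpha' \<alpha> (fst s) (snd s)) * ?g s)"
      using z by (simp add: sum.remove alpha'_def)
    moreover have "(\<Sum>s\<in>idx p q - {(0,0)}. complex_of_real (alpha' \<alpha> (fst s) (snd s)) * ?g s) = (\<Sum>s\<in>idx p q - {(0,0)}. complex_of_real (\<alpha> (fst s) (snd s)) * ?g s)"
      by (intro sum.cong) (auto simp: alpha'_def)
    ultimately show ?thesis by simp
  qed
  finally show ?thesis .
qed


definition chi :: "nat \<Rightarrow> nat \<Rightarrow> nat \<times> nat \<Rightarrow> nat \<times> nat \<Rightarrow> complex" where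
  "chi p q k m = cnj (omega p) ^ (fst m * fst k) * cnj (omega q) ^ (snd m * snd k)"

definition Fk :: "nat \<Rightarrow> nat \<Rightarrow> nat \<times> nat \<Rightarrow> nat \<times> nat \<Rightarrow> nat \<times> nat \<Rightarrow> (nat \<times> nat) cmat" where
  "Fk p q c d k = (\<lambda>a b. \<Sum>m\<in>idx p q. chi p q k m * munit (addm p q m c) (addm p q m d) a b)"

lemma mod_add_cancel_nat: "((x::nat) + a) mod n = (y + a) mod n \<longleftrightarrow> x mod n = y mod n"
  by (simp add: nat_mod_eq_iff)

lemma cnj_omega_root: "n \<ge> 1 \<Longrightarrow> cnj (omega n) ^ n = 1"
  using omega_pow_n[of n] by (metis complex_cnj_one complex_cnj_power)

lemma chi_add: assumes "p \<ge> 1" "q \<ge> 1"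
  shows "chi p q k (addm p q m s) = chi p q k m * chi p q k s"
proof -
  have 1: "cnj (omega p) ^ (((fst m + fst s) mod p) * fst k) = cnj (omega p) ^ ((fst m + fst s) * fst k)"
    using pow_mod_root[OF cnj_omega_root[OF assms(1)]] by (simp add: power_mult)
  have 2: "cnj (omega q) ^ (((snd m + snd s) mod q) * snd k) = cnj (omega q) ^ ((snd m + snd s) * snd k)"
    using pow_mod_root[OF cnj_omega_root[OF assms(2)]] by (simp add: power_mult)
  show ?thesis unfolding chi_def addm_def using 1 2 by (simp add: algebra_simps power_add)
qed

lemma addm_bij: assumes "p \<ge> 1" "q \<ge> 1"
  shows "bij_betw (\<lambda>m. addm p q m s) (idx p q) (idx p q)"
proof -
  have inj: "inj_on (\<lambda>m. addm p q m s) (idx p q)"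
  proof (rule inj_onI)
    fix x y assume "x \<in> idx p q" "y \<in> idx p q" "addm p q x s = addm p q y s"
    then show "x = y" using mod_add_cancel_nat
      by (cases x; cases y) (auto simp: addm_def idx_def)
  qed
  have "(\<lambda>m. addm p q m s) ` idx p q \<subseteq> idx p q" using addm_idx[OF assms] by blast
  then have "(\<lambda>m. addm p q m s) ` idx p q = idx p q" using endo_inj_surj[OF finite_idx _ inj] by blast
  with inj show ?thesis by (simp add: bij_betw_def)
qed

lemma addm_cancel: assumes "a \<in> idx p q"
  shows "addm p q (addm p q m s) c = addm p q s a \<longleftrightarrow> addm p q m c = a"
proof -
  have e1: "((fst m + fst s) mod p + fst c) mod p = ((fst m + fst c) + fst s) mod p"
    by (simp only: mod_add_left_eq) (simp add: ac_simps)
  have e2: "((snd m + snd s) mod q + snd c) mod q = ((snd m + snd c) + snd s) mod q"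
    by (simp only: mod_add_left_eq) (simp add: ac_simps)
  have e3: "(fst s + fst a) mod p = (fst a + fst s) mod p" "(snd s + snd a) mod q = (snd a + snd s) mod q"
    by (simp_all add: add.commute)
  have a: "fst a mod p = fst a" "snd a mod q = snd a" using assms by (auto simp: idx_def)
  show ?thesis unfolding addm_def prod_eq_iff fst_conv snd_conv e1 e2 e3 mod_add_cancel_nat a ..
qed

lemma lam_chi: "lam p q \<alpha> (fst k) (snd k) = (\<Sum>s\<in>idx p q. complex_of_real (alpha' \<alpha> (fst s) (snd s)) * chi p q k s)"
  unfolding lam_def chi_def by (simp add: case_prod_beta mult.assoc)

lemma Fk_eigen: assumes "a \<in> idx p q" "b \<in> idx p q" "c \<in> idx p q" "d \<in> idx p q"
    and "\<alpha> 0 0 = 0" "p \<ge> 1" "q \<ge> 1"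
  shows "Ltil p q \<alpha> (Fk p q c d k) a b = lam p q \<alpha> (fst k) (snd k) * Fk p q c d k a b"
proof -
  let ?a = "\<lambda>s. complex_of_real (alpha' \<alpha> (fst s) (snd s))"
  let ?P = "\<lambda>m s. addm p q m c = addm p q s a \<and> addm p q m d = addm p q s b"
  have "Ltil p q \<alpha> (Fk p q c d k) a b = (\<Sum>m\<in>idx p q. chi p q k m * Ltil p q \<alpha> (munit (addm p q m c) (addm p q m d)) a b)"
    unfolding Fk_def by (rule Ltil_sum) simp
  also have "\<dots> = (\<Sum>m\<in>idx p q. chi p q k m * (\<Sum>s\<in>idx p q. ?a s * (if ?P m s then 1 else 0)))"
    using assms by (intro sum.cong refl) (simp add: Ltil_munit addm_idx)
  also have "\<dots> = (\<Sum>s\<in>idx p q. ?a s * (\<Sum>m\<in>idx p q. chi p q k m * (if ?P m s then 1 else 0)))"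
    unfolding sum_distrib_left by (subst sum.swap) (simp add: algebra_simps)
  also have "\<dots> = (\<Sum>s\<in>idx p q. ?a s * (chi p q k s * Fk p q c d k a b))"
  proof (intro sum.cong refl arg_cong2[where f="(*)"])
    fix s assume s: "s \<in> idx p q"
    have "(\<Sum>m\<in>idx p q. chi p q k m * (if ?P m s then 1 else 0))
        = (\<Sum>m\<in>idx p q. chi p q k (addm p q m s) * (if ?P (addm p q m s) s then 1 else 0))"
      using sum.reindex_bij_betw[OF addm_bij[OF assms(6,7), of s], of "\<lambda>m. chi p q k m * (if ?P m s then 1 else 0)"]
      by simp
    also have "\<dots> = (\<Sum>m\<in>idx p q. chi p q k s * (chi p q k m * munit (addm p q m c) (addm p q m d) a b))"
      using assms by (intro sum.cong refl) (auto simp: chi_add addm_cancel munit_def)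
    also have "\<dots> = chi p q k s * Fk p q c d k a b"
      unfolding Fk_def by (simp add: sum_distrib_left)
    finally show "(\<Sum>m\<in>idx p q. chi p q k m * (if ?P m s then 1 else 0)) = chi p q k s * Fk p q c d k a b" .
  qed
  also have "\<dots> = lam p q \<alpha> (fst k) (snd k) * Fk p q c d k a b"
    unfolding lam_chi sum_distrib_right by (intro sum.cong refl) (simp add: algebra_simps)
  finally show ?thesis .
qed


lemma chi_sum: assumes "m \<in> idx p q"
  shows "(\<Sum>k\<in>idx p q. chi p q k m) = (if m = (0,0) then of_nat (p*q) else 0)"
proof -
  have "(\<Sum>k\<in>idx p q. chi p q k m) = (\<Sum>k1<p. (cnj (omega p) ^ fst m) ^ k1) * (\<Sum>k2<q. (cnj (omega q) ^ snd m) ^ k2)"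
    unfolding idx_def chi_def sum_product sum.cartesian_product
    by (intro sum.cong) (auto simp: power_mult lessThan_atLeast0)
  also have "\<dots> = (if m = (0,0) then of_nat (p*q) else 0)"
    using assms by (cases m) (simp add: geo_sum idx_def)
  finally show ?thesis .
qed

lemma munit_ortho: assumes "a \<in> idx p q" "b \<in> idx p q" "c \<in> idx p q" "d \<in> idx p q"
  shows "munit c d a b = complex_of_real (1 / real (p*q)) * (\<Sum>k\<in>idx p q. Fk p q c d k a b)"
proof -
  have pq: "p \<ge> 1" "q \<ge> 1" using assms by (auto simp: idx_def)
  have z: "(0,0) \<in> idx p q" using pq by (simp add: idx_def)
  have "(\<Sum>k\<in>idx p q. Fk p q c d k a b) = (\<Sum>m\<in>idx p q. munit (addm p q m c) (addm p q m d) a b * (\<Sum>k\<in>idx p q. chi p q k m))"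
    unfolding Fk_def sum_distrib_left by (subst sum.swap) (simp add: algebra_simps)
  also have "\<dots> = (\<Sum>m\<in>idx p q. if m = (0,0) then munit c d a b * of_nat (p*q) else 0)"
  proof (intro sum.cong refl)
    fix m assume m: "m \<in> idx p q"
    have "addm p q (0,0) c = c" "addm p q (0,0) d = d" using assms(3,4)
      by (cases c; cases d; simp add: addm_def idx_def)+
    then show "munit (addm p q m c) (addm p q m d) a b * (\<Sum>k\<in>idx p q. chi p q k m) = (if m = (0,0) then munit c d a b * of_nat (p*q) else 0)"
      using chi_sum[OF m] by auto
  qed
  also have "\<dots> = munit c d a b * of_nat (p*q)" using z by (simp add: sum.delta')
  finally have "(\<Sum>k\<in>idx p q. Fk p q c d k a b) = munit c d a b * of_nat (p*q)" .
  then show ?thesis using pq by simp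
qed

lemma Ltil_pow: assumes "a \<in> idx p q" "b \<in> idx p q" "c \<in> idx p q" "d \<in> idx p q" "\<alpha> 0 0 = 0"
  shows "(Ltil p q \<alpha> ^^ n) (munit c d) a b = (\<Sum>k\<in>idx p q. (complex_of_real (1 / real (p*q)) * lam p q \<alpha> (fst k) (snd k) ^ n) * Fk p q c d k a b)"
  using assms(1,2)
proof (induction n arbitrary: a b)
  case 0
  then show ?case using munit_ortho[OF 0 assms(3,4)] by (simp add: sum_distrib_left)
next
  case (Suc n)
  have pq: "p \<ge> 1" "q \<ge> 1" using assms by (auto simp: idx_def)
  have "(Ltil p q \<alpha> ^^ Suc n) (munit c d) a b = Ltil p q \<alpha> ((Ltil p q \<alpha> ^^ n) (munit c d)) a b" by simp
  also have "\<dots> = Ltil p q \<alpha> (\<lambda>a b. \<Sum>k\<in>idx p q. (complex_of_real (1 / real (p*q)) * lam p q \<alpha> (fst k) (snd k) ^ n) * Fk p q c d k a b) a b"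
    using Suc by (intro Ltil_local) auto
  also have "\<dots> = (\<Sum>k\<in>idx p q. (complex_of_real (1 / real (p*q)) * lam p q \<alpha> (fst k) (snd k) ^ n) * Ltil p q \<alpha> (Fk p q c d k) a b)"
    by (rule Ltil_sum) simp
  also have "\<dots> = (\<Sum>k\<in>idx p q. (complex_of_real (1 / real (p*q)) * lam p q \<alpha> (fst k) (snd k) ^ Suc n) * Fk p q c d k a b)"
    using Suc.prems assms pq by (intro sum.cong refl) (simp add: Fk_eigen)
  finally show ?case .
qed

lemma Ttil_sums: assumes "a \<in> idx p q" "b \<in> idx p q" "c \<in> idx p q" "d \<in> idx p q" "\<alpha> 0 0 = 0"
  shows "(\<lambda>n. complex_of_real (t ^ n / fact n) * (Ltil p q \<alpha> ^^ n) (munit c d) a b) sums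
     (\<Sum>k\<in>idx p q. (complex_of_real (1 / real (p*q)) * Fk p q c d k a b) * exp (complex_of_real t * lam p q \<alpha> (fst k) (snd k)))"
proof -
  have "(\<lambda>n. \<Sum>k\<in>idx p q. (complex_of_real (1 / real (p*q)) * Fk p q c d k a b) * ((complex_of_real t * lam p q \<alpha> (fst k) (snd k)) ^ n /\<^sub>R fact n)) sums
     (\<Sum>k\<in>idx p q. (complex_of_real (1 / real (p*q)) * Fk p q c d k a b) * exp (complex_of_real t * lam p q \<alpha> (fst k) (snd k)))"
    by (intro sums_sum sums_mult exp_converges)
  moreover have "(\<lambda>n. \<Sum>k\<in>idx p q. (complex_of_real (1 / real (p*q)) * Fk p q c d k a b) * ((complex_of_real t * lam p q \<alpha> (fst k) (snd k)) ^ n /\<^sub>R fact n))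
     = (\<lambda>n. complex_of_real (t ^ n / fact n) * (Ltil p q \<alpha> ^^ n) (munit c d) a b)"
  proof
    fix n
    show "(\<Sum>k\<in>idx p q. (complex_of_real (1 / real (p*q)) * Fk p q c d k a b) * ((complex_of_real t * lam p q \<alpha> (fst k) (snd k)) ^ n /\<^sub>R fact n))
     = complex_of_real (t ^ n / fact n) * (Ltil p q \<alpha> ^^ n) (munit c d) a b"
      unfolding Ltil_pow[where n=n and \<alpha>=\<alpha> and p=p and q=q and a=a and b=b and c=c and d=d, OF assms] sum_distrib_left
      by (intro sum.cong refl) (simp add: scaleR_conv_of_real power_mult_distrib field_simps)
  qed
  ultimately show ?thesis by simp
qed


lemma Phi_chi: assumes "m \<in> idx p q"
  shows "Phi p q \<alpha> (p - fst m) (q - snd m) t = (\<Sum>k\<in>idx p q. chi p q k m * exp (complex_of_real t * lam p q \<alpha> (fst k) (snd k)))"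
proof -
  have m: "fst m \<le> p" "snd m \<le> q" "p \<ge> 1" "q \<ge> 1" using assms by (auto simp: idx_def)
  show ?thesis unfolding Phi_def chi_def case_prod_beta
    by (intro sum.cong refl) (simp add: power_mult cnj_omega_pow[OF m(1,3)] cnj_omega_pow[OF m(2,4)])
qed

lemma Ttil_munit: assumes "a \<in> idx p q" "b \<in> idx p q" "c \<in> idx p q" "d \<in> idx p q" "\<alpha> 0 0 = 0"
  shows "(\<lambda>n. complex_of_real (t ^ n / fact n) * (Ltil p q \<alpha> ^^ n) (munit c d) a b) sums
     (complex_of_real (1 / real (p*q)) * (\<Sum>m\<in>idx p q. Phi p q \<alpha> (p - fst m) (q - snd m) t * munit (addm p q m c) (addm p q m d) a b))"
proof -
  let ?e = "\<lambda>k. exp (complex_of_real t * lam p q \<alpha> (fst k) (snd k))"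
  have "(\<Sum>k\<in>idx p q. (complex_of_real (1 / real (p*q)) * Fk p q c d k a b) * ?e k)
     = complex_of_real (1 / real (p*q)) * (\<Sum>k\<in>idx p q. \<Sum>m\<in>idx p q. ?e k * chi p q k m * munit (addm p q m c) (addm p q m d) a b)"
    unfolding Fk_def sum_distrib_left sum_distrib_right by (intro sum.cong refl) (simp add: algebra_simps)
  also have "\<dots> = complex_of_real (1 / real (p*q)) * (\<Sum>m\<in>idx p q. \<Sum>k\<in>idx p q. ?e k * chi p q k m * munit (addm p q m c) (addm p q m d) a b)"
    by (subst sum.swap) simp
  also have "\<dots> = complex_of_real (1 / real (p*q)) * (\<Sum>m\<in>idx p q. Phi p q \<alpha> (p - fst m) (q - snd m) t * munit (addm p q m c) (addm p q m d) a b)"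
  proof (intro arg_cong2[where f="(*)"] refl sum.cong)
    fix m assume m: "m \<in> idx p q"
    show "(\<Sum>k\<in>idx p q. ?e k * chi p q k m * munit (addm p q m c) (addm p q m d) a b) = Phi p q \<alpha> (p - fst m) (q - snd m) t * munit (addm p q m c) (addm p q m d) a b"
      unfolding Phi_chi[OF m] sum_distrib_right by (intro sum.cong refl) (simp add: mult_ac)
  qed
  finally show ?thesis using Ttil_sums[where t=t and \<alpha>=\<alpha> and p=p and q=q and a=a and b=b and c=c and d=d, OF assms] by simp
qed

lemma Ltil_pow_scale: "(Ltil p q \<alpha> ^^ n) (\<lambda>x y. s * f x y) = (\<lambda>x y. s * (Ltil p q \<alpha> ^^ n) f x y)"
  by (induction n) (simp_all add: Ltil_scale)

theorem mainTheorem10: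
  fixes p q :: nat and \<alpha> :: "nat \<Rightarrow> nat \<Rightarrow> real"
  assumes "p \<ge> 1" and "q \<ge> 1"
    and "\<forall>(i, j)\<in>idx p q. 0 \<le> \<alpha> i j \<and> \<alpha> i j \<le> 1"
    and "(\<Sum>(i, j)\<in>idx p q. \<alpha> i j) = 1"
    and "\<alpha> 0 0 = 0"
  shows
    "(\<forall>i j i' j' t. (i, j) \<in> idx p q \<longrightarrow> (i', j') \<in> idx p q \<longrightarrow> t \<ge> 0 \<longrightarrow>
       (\<forall>A\<in>idx p q. \<forall>B\<in>idx p q.
          Ttil p q \<alpha> t (munit (i, j) (i', j')) A B =
          complex_of_real (1 / real (p * q)) *
          (\<Sum>(m, n)\<in>idx p q. Phi p q \<alpha> (p - m) (q - n) t *
             munit ((m + i) mod p, (n + j) mod q) ((m + i') mod p, (n + j') mod q) A B)))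
   \<and> (\<forall>t. t \<ge> 0 \<longrightarrow>
       (\<forall>X\<in>idx p q \<times> idx p q. \<forall>Y\<in>idx p q \<times> idx p q.
          idtensor (Ttil p q \<alpha> t) (outer (OmegaRho p q) (OmegaRho p q)) X Y =
          complex_of_real (1 / real (p * q)) *
          (\<Sum>(m, n)\<in>idx p q. Phi p q \<alpha> (p - m) (q - n) t *
             outer (uvec p q m n) (uvec p q m n) X Y)))"
proof -
  have pq: "p \<ge> 1" "q \<ge> 1" and a0: "\<alpha> 0 0 = 0" using assms by auto
  have T: "Ttil p q \<alpha> t (munit c d) A B = complex_of_real (1 / real (p*q)) * (\<Sum>m\<in>idx p q. Phi p q \<alpha> (p - fst m) (q - snd m) t * munit (addm p q m c) (addm p q m d) A B)"
    if "A \<in> idx p q" "B \<in> idx p q" "c \<in> idx p q" "d \<in> idx p q" for A B c d t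
    using sums_unique[OF Ttil_munit[where t=t and \<alpha>=\<alpha> and p=p and q=q and a=A and b=B and c=c and d=d, OF that a0]]
    by (simp add: Ttil_def)
  have P1: "\<forall>i j i' j' t. (i, j) \<in> idx p q \<longrightarrow> (i', j') \<in> idx p q \<longrightarrow> t \<ge> 0 \<longrightarrow>
       (\<forall>A\<in>idx p q. \<forall>B\<in>idx p q.
          Ttil p q \<alpha> t (munit (i, j) (i', j')) A B =
          complex_of_real (1 / real (p * q)) *
          (\<Sum>(m, n)\<in>idx p q. Phi p q \<alpha> (p - m) (q - n) t *
             munit ((m + i) mod p, (n + j) mod q) ((m + i') mod p, (n + j') mod q) A B))"
    by (auto simp: T case_prod_beta addm_def)
  have P2: "\<forall>t. t \<ge> 0 \<longrightarrow>
       (\<forall>X\<in>idx p q \<times> idx p q. \<forall>Y\<in>idx p q \<times> idx p q.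
          idtensor (Ttil p q \<alpha> t) (outer (OmegaRho p q) (OmegaRho p q)) X Y =
          complex_of_real (1 / real (p * q)) *
          (\<Sum>(m, n)\<in>idx p q. Phi p q \<alpha> (p - m) (q - n) t *
             outer (uvec p q m n) (uvec p q m n) X Y))"
  proof (intro allI impI ballI)
    fix t :: real and X Y assume X: "X \<in> idx p q \<times> idx p q" and Y: "Y \<in> idx p q \<times> idx p q"
    obtain a c where Xe: "X = (a, c)" "a \<in> idx p q" "c \<in> idx p q" using X by auto
    obtain b d where Ye: "Y = (b, d)" "b \<in> idx p q" "d \<in> idx p q" using Y by auto
    define r where "r = complex_of_real (1 / sqrt (real (p * q)))"
    define s where "s = r * cnj r"
    have blk: "(\<lambda>c' d'. outer (OmegaRho p q) (OmegaRho p q) (a, c') (b, d')) = (\<lambda>c' d'. s * munit a b c' d')"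
      using Xe Ye by (cases a; cases b) (auto simp: outer_def OmegaRho_def munit_def s_def r_def fun_eq_iff)
    have "idtensor (Ttil p q \<alpha> t) (outer (OmegaRho p q) (OmegaRho p q)) X Y
        = Ttil p q \<alpha> t (\<lambda>c' d'. s * munit a b c' d') c d"
      unfolding Xe(1) Ye(1) idtensor_def using blk by simp
    also have "\<dots> = s * Ttil p q \<alpha> t (munit a b) c d"
    proof -
      have "(\<lambda>n. complex_of_real (t ^ n / fact n) * (Ltil p q \<alpha> ^^ n) (munit a b) c d) sums Ttil p q \<alpha> t (munit a b) c d"
        using Ttil_munit[where t=t and \<alpha>=\<alpha> and p=p and q=q and a=c and b=d and c=a and d=b, OF Xe(3) Ye(3) Xe(2) Ye(2) a0]
          T[OF Xe(3) Ye(3) Xe(2) Ye(2), of t] by simp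
      from sums_mult[OF this, of s] have "(\<lambda>n. complex_of_real (t ^ n / fact n) * (Ltil p q \<alpha> ^^ n) (\<lambda>c' d'. s * munit a b c' d') c d) sums (s * Ttil p q \<alpha> t (munit a b) c d)"
        by (simp add: Ltil_pow_scale mult_ac)
      then show ?thesis by (simp add: Ttil_def sums_unique[symmetric])
    qed
    also have "\<dots> = complex_of_real (1 / real (p * q)) *
          (\<Sum>(m, n)\<in>idx p q. Phi p q \<alpha> (p - m) (q - n) t * outer (uvec p q m n) (uvec p q m n) X Y)"
      unfolding T[OF Xe(3) Ye(3) Xe(2) Ye(2)] sum_distrib_left Xe(1) Ye(1)
      using Xe(2,3) Ye(2,3) by (intro sum.cong refl) (auto simp: case_prod_beta outer_def uvec_def munit_def addm_def s_def r_def prod_eq_iff)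
    finally show "idtensor (Ttil p q \<alpha> t) (outer (OmegaRho p q) (OmegaRho p q)) X Y = complex_of_real (1 / real (p * q)) *
          (\<Sum>(m, n)\<in>idx p q. Phi p q \<alpha> (p - m) (q - n) t * outer (uvec p q m n) (uvec p q m n) X Y)" .
  qed
  from P1 P2 show ?thesis by blast
qed

end
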